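(* For a $*$-ring $R$ the following are equivalent: (1) $R$ is a generalized p.q.-Baer $*$-ring; (2) $R$ has a unity, and for every $x\in R$ there exist a central projection $e$ and $n\in\mathbb N$ such that $r_R((xR)^n)=r_R((eR)^n)$.
   Context: A $*$-ring is a ring with an involution; a projection is $e$ with $e=e^*=e^2$. $r_R(S)=\{a\in R: sa=0\ \forall s\in S\}$. $R$ is a generalized p.q.-Baer $*$-ring if for every $x\in R$ there are $n\in\mathbb N$ and a projection $e$ with $r_R((xR)^n)=eR$ (equivalently, for every principal ideal $I$, $r_R(I^n)=eR$ for some $n$ and projection $e$). *)

theory Defs
  imports Main
begin

text \<open>Rings are associative, not necessarily unital (type class ring).
  An involution on a ring.\<close>
definition is_involution :: "('a::ring \<Rightarrow> 'a) \<Rightarrow> bool" where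
  "is_involution star \<longleftrightarrow>
     (\<forall>x y. star (x + y) = star x + star y) \<and>
     (\<forall>x y. star (x * y) = star y * star x) \<and>
     (\<forall>x. star (star x) = x)"

definition is_projection :: "('a::ring \<Rightarrow> 'a) \<Rightarrow> 'a \<Rightarrow> bool" where
  "is_projection star e \<longleftrightarrow> e = star e \<and> e * e = e"

definition is_central :: "'a::ring \<Rightarrow> bool" where
  "is_central e \<longleftrightarrow> (\<forall>y. e * y = y * e)"

definition has_unity :: "'a::ring itself \<Rightarrow> bool" where
  "has_unity _ \<longleftrightarrow> (\<exists>u::'a. \<forall>y. u * y = y \<and> y * u = y)"

definition rmul_set :: "'a::ring \<Rightarrow> 'a set" where
  "rmul_set x = {x * r | r. True}"

definition r_ann :: "'a::ring set \<Rightarrow> 'a set" where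
  "r_ann S = {a. \<forall>s\<in>S. s * a = 0}"

inductive_set add_closure :: "'a::ring set \<Rightarrow> 'a set" for S where
  zero: "0 \<in> add_closure S"
| base: "s \<in> S \<Longrightarrow> s \<in> add_closure S"
| add: "a \<in> add_closure S \<Longrightarrow> b \<in> add_closure S \<Longrightarrow> a + b \<in> add_closure S"
| neg: "a \<in> add_closure S \<Longrightarrow> - a \<in> add_closure S"

definition set_prod :: "'a::ring set \<Rightarrow> 'a set \<Rightarrow> 'a set" where
  "set_prod A B = add_closure {a * b | a b. a \<in> A \<and> b \<in> B}"

text \<open>Power I^n of a (one-sided) ideal I, for n \<ge> 1 (I^1 = I).\<close>
fun ideal_pow :: "'a::ring set \<Rightarrow> nat \<Rightarrow> 'a set" where
  "ideal_pow I 0 = UNIV"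
| "ideal_pow I (Suc 0) = I"
| "ideal_pow I (Suc (Suc n)) = set_prod (ideal_pow I (Suc n)) I"

definition gen_pq_baer :: "('a::ring \<Rightarrow> 'a) \<Rightarrow> bool" where
  "gen_pq_baer star \<longleftrightarrow>
     (\<forall>x::'a. \<exists>n\<ge>1. \<exists>e. is_projection star e \<and>
        r_ann (ideal_pow (rmul_set x) n) = rmul_set e)"

end

theory Submission
  imports Defs
begin

lemma add_closure_sub:
  assumes "0 \<in> A" "\<And>a b. a\<in>A \<Longrightarrow> b\<in>A \<Longrightarrow> a+b\<in>A" "\<And>a. a\<in>A \<Longrightarrow> -a\<in>A" "S \<subseteq> A"
  shows "add_closure S \<subseteq> A"
proof
  fix y assume "y \<in> add_closure S" then show "y \<in> A"
    by induction (use assms in auto)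
qed

definition rclosed :: "'a::ring set \<Rightarrow> bool" where
  "rclosed J \<longleftrightarrow> (\<forall>s\<in>J. \<forall>r. s*r \<in> J)"

lemma rclosed_prod:
  assumes "rclosed B" shows "rclosed (set_prod A B)"
  unfolding rclosed_def set_prod_def
proof (intro ballI allI)
  fix s r assume "s \<in> add_closure {a * b |a b. a \<in> A \<and> b \<in> B}"
  then show "s * r \<in> add_closure {a * b |a b. a \<in> A \<and> b \<in> B}"
  proof induction
    case zero then show ?case by (simp add: add_closure.zero)
  next
    case (base s)
    then obtain a b where "s = a*b" "a\<in>A" "b\<in>B" by blast
    then have "s*r = a*(b*r)" "b*r \<in> B" using assms by (auto simp: rclosed_def mult.assoc)
    then show ?case using \<open>a\<in>A\<close> by (intro add_closure.base) blast
  next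
    case (add a b) then show ?case by (simp add: distrib_right add_closure.add)
  next
    case (neg a) then show ?case by (simp add: add_closure.neg)
  qed
qed


lemma rclosed_rmul: "rclosed (rmul_set x)"
  by (auto simp: rclosed_def rmul_set_def mult.assoc)

lemma rclosed_pow': "n \<ge> 1 \<Longrightarrow> rclosed (ideal_pow (rmul_set x) n)"
proof (induction n rule: nat_induct_at_least)
  case base then show ?case using rclosed_rmul by simp
next
  case (Suc n)
  then obtain m where "n = Suc m" by (cases n) auto
  then show ?case using rclosed_prod[OF rclosed_rmul] by simp
qed

lemma zero_pow: "n \<ge> 1 \<Longrightarrow> ideal_pow (rmul_set (0::'a::ring)) n \<subseteq> {0}"
proof (induction n rule: nat_induct_at_least)
  case base then show ?case by (auto simp: rmul_set_def)
next
  case (Suc n)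
  then obtain m where m: "n = Suc m" by (cases n) auto
  have "set_prod (ideal_pow (rmul_set (0::'a)) n) (rmul_set 0) \<subseteq> {0}"
    unfolding set_prod_def by (rule add_closure_sub) (auto simp: rmul_set_def)
  then show ?case using m by simp
qed

lemma idem_pow:
  assumes "e*e = (e::'a::ring)" "n \<ge> 1"
  shows "ideal_pow (rmul_set e) n = rmul_set e"
  using assms(2)
proof (induction n rule: nat_induct_at_least)
  case base then show ?case by simp
next
  case (Suc n)
  then obtain m where m: "n = Suc m" by (cases n) auto
  have "set_prod (rmul_set e) (rmul_set e) = rmul_set e"
  proof
    show "set_prod (rmul_set e) (rmul_set e) \<subseteq> rmul_set e"
      unfolding set_prod_def
    proof (rule add_closure_sub)
      show "0 \<in> rmul_set e" unfolding rmul_set_def by (metis (mono_tags) mem_Collect_eq mult_zero_right)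
      show "a + b \<in> rmul_set e" if ha: "a \<in> rmul_set e" "b \<in> rmul_set e" for a b
      proof -
        obtain r s where "a = e*r" "b = e*s" using ha unfolding rmul_set_def by blast
        then have "a + b = e*(r+s)" by (simp add: distrib_left)
        then show ?thesis unfolding rmul_set_def by blast
      qed
      show "- a \<in> rmul_set e" if ha: "a \<in> rmul_set e" for a
      proof -
        obtain r where "a = e*r" using ha unfolding rmul_set_def by blast
        then have "- a = e*(-r)" by simp
        then show ?thesis unfolding rmul_set_def by blast
      qed
      show "{a * b |a b. a \<in> rmul_set e \<and> b \<in> rmul_set e} \<subseteq> rmul_set e"
      proof
        fix y assume "y \<in> {a * b |a b. a \<in> rmul_set e \<and> b \<in> rmul_set e}"
        then obtain r s where "y = (e*r)*(e*s)" unfolding rmul_set_def by blast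
        then have "y = e*(r*(e*s))" by (simp add: mult.assoc)
        then show "y \<in> rmul_set e" unfolding rmul_set_def by blast
      qed
    qed
    show "rmul_set e \<subseteq> set_prod (rmul_set e) (rmul_set e)"
    proof
      fix y assume "y \<in> rmul_set e"
      then obtain r where r: "y = e*r" unfolding rmul_set_def by blast
      have "e \<in> rmul_set e" using assms(1) unfolding rmul_set_def by (metis (mono_tags) mem_Collect_eq)
      moreover have "y = e * (e*r)" using r assms(1) by (simp add: mult.assoc[symmetric])
      ultimately show "y \<in> set_prod (rmul_set e) (rmul_set e)"
        unfolding set_prod_def using r
        by (intro add_closure.base) (auto simp: rmul_set_def)
    qed
  qed
  then show ?case using m Suc by simp
qed

lemma ann_central:
  assumes u: "\<And>y. u*y = y \<and> y*u = y" and c: "is_central e" and i: "e*e = (e::'a::ring)"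
  shows "r_ann (rmul_set e) = rmul_set (u - e)"
proof
  show "r_ann (rmul_set e) \<subseteq> rmul_set (u - e)"
  proof
    fix a assume "a \<in> r_ann (rmul_set e)"
    then have "e*u*a = 0" unfolding r_ann_def rmul_set_def by blast
    then have "e*a = 0" using u by simp
    then have "a = (u-e)*a" using u by (simp add: left_diff_distrib)
    then show "a \<in> rmul_set (u-e)" unfolding rmul_set_def by blast
  qed
  show "rmul_set (u - e) \<subseteq> r_ann (rmul_set e)"
  proof
    fix a assume "a \<in> rmul_set (u-e)"
    then obtain b where b: "a = (u-e)*b" unfolding rmul_set_def by blast
    have "e*r*a = 0" for r
    proof -
      have "e*r*a = r*(e*(u-e))*b" using c b unfolding is_central_def by (simp add: mult.assoc)
      also have "e*(u-e) = 0" using u i by (simp add: right_diff_distrib)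
      finally show ?thesis by simp
    qed
    then show "a \<in> r_ann (rmul_set e)" unfolding r_ann_def rmul_set_def by blast
  qed
qed

theorem mainTheorem7:
  fixes star :: "'a::ring \<Rightarrow> 'a"
  assumes "is_involution star"
  shows "gen_pq_baer star \<longleftrightarrow>
    (has_unity TYPE('a) \<and>
     (\<forall>x::'a. \<exists>e. \<exists>n\<ge>1. is_projection star e \<and> is_central e \<and>
        r_ann (ideal_pow (rmul_set x) n) = r_ann (ideal_pow (rmul_set e) n)))"
proof -
  have sadd: "\<And>x y. star (x + y) = star x + star y"
    and smul: "\<And>x y. star (x * y) = star y * star x"
    and sinv: "\<And>x. star (star x) = x" using assms unfolding is_involution_def by auto
  have sminus: "star (x - y) = star x - star y" for x y
    by (metis add_diff_cancel sadd diff_add_cancel)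
  show ?thesis
  proof
    assume G: "gen_pq_baer star"
    obtain n0 e0 where n0: "n0 \<ge> 1" and e0: "is_projection star e0"
      and h0: "r_ann (ideal_pow (rmul_set (0::'a)) n0) = rmul_set e0"
      using G unfolding gen_pq_baer_def by blast
    have "r_ann (ideal_pow (rmul_set (0::'a)) n0) = UNIV"
      using zero_pow[OF n0] unfolding r_ann_def by auto
    then have all: "\<And>y. \<exists>t. y = e0 * t" using h0 unfolding rmul_set_def by auto
    have ee0: "e0*e0 = e0" "star e0 = e0" using e0 unfolding is_projection_def by auto
    have left: "e0 * y = y" for y
      using all[of y] ee0 by (metis mult.assoc)
    have right: "y * e0 = y" for y
    proof -
      have "e0 * star y = star y" by (rule left)
      then have "star (e0 * star y) = y" by (simp add: sinv)
      then show ?thesis using smul sinv ee0 by metis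
    qed
    have U: "has_unity TYPE('a)" unfolding has_unity_def using left right by blast
    have "\<exists>e. \<exists>n\<ge>1. is_projection star e \<and> is_central e \<and>
        r_ann (ideal_pow (rmul_set x) n) = r_ann (ideal_pow (rmul_set e) n)" for x
    proof -
      obtain n e where n: "n \<ge> 1" and e: "is_projection star e"
        and h: "r_ann (ideal_pow (rmul_set x) n) = rmul_set e"
        using G unfolding gen_pq_baer_def by blast
      have ee: "e*e = e" "star e = e" using e unfolding is_projection_def by auto
      let ?J = "ideal_pow (rmul_set x) n"
      have rc: "rclosed ?J" by (rule rclosed_pow'[OF n])
      have lid: "r * a \<in> r_ann ?J" if ha: "a \<in> r_ann ?J" for a r
      proof -
        have "\<forall>s\<in>?J. s*(r*a) = 0"
        proof
          fix s assume "s \<in> ?J"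
          then have "s*r \<in> ?J" using rc unfolding rclosed_def by blast
          then have "s*r*a = 0" using ha unfolding r_ann_def by blast
          then show "s*(r*a) = 0" by (simp add: mult.assoc)
        qed
        then show ?thesis unfolding r_ann_def by blast
      qed
      have eR: "e \<in> rmul_set e" using ee unfolding rmul_set_def by (metis (mono_tags) mem_Collect_eq)
      have ere: "e*r*e = r*e" for r
      proof -
        have "r*e \<in> rmul_set e" using lid eR h by blast
        then obtain t where "r*e = e*t" unfolding rmul_set_def by blast
        then show ?thesis using ee by (metis mult.assoc)
      qed
      have cen: "is_central e" unfolding is_central_def
      proof
        fix r
        have "e*star r*e = star r*e" by (rule ere)
        then have "star (e*star r*e) = star (star r * e)" by simp
        then have "e*r*e = e*r" using smul sinv ee by (simp add: mult.assoc)
        then show "e*r = r*e" using ere by simp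
      qed
      define f where "f = e0 - e"
      have fc: "is_central f" using cen left right unfolding is_central_def f_def
        by (simp add: left_diff_distrib right_diff_distrib)
      have ff: "f*f = f" using ee left right unfolding f_def
        by (simp add: left_diff_distrib right_diff_distrib)
      have fs: "star f = f" unfolding f_def using sminus ee ee0 by simp
      have "r_ann (ideal_pow (rmul_set f) n) = rmul_set (e0 - f)"
        using idem_pow[OF ff n] ann_central[of e0 f] left right fc ff by simp
      also have "e0 - f = e" unfolding f_def by simp
      finally show ?thesis using h n fc ff fs unfolding is_projection_def by metis
    qed
    then show "has_unity TYPE('a) \<and> (\<forall>x::'a. \<exists>e. \<exists>n\<ge>1. is_projection star e \<and> is_central e \<and>
        r_ann (ideal_pow (rmul_set x) n) = r_ann (ideal_pow (rmul_set e) n))" using U by blast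
  next
    assume A: "has_unity TYPE('a) \<and> (\<forall>x::'a. \<exists>e. \<exists>n\<ge>1. is_projection star e \<and> is_central e \<and>
        r_ann (ideal_pow (rmul_set x) n) = r_ann (ideal_pow (rmul_set e) n))"
    then obtain u :: 'a where u: "\<And>y. u*y = y \<and> y*u = y" unfolding has_unity_def by blast
    have su: "star u = u"
    proof -
      have "star u = star u * u" using u by simp
      then have "star (star u) = star (star u * u)" by simp
      then show ?thesis using smul sinv u by metis
    qed
    show "gen_pq_baer star" unfolding gen_pq_baer_def
    proof
      fix x
      obtain e n where n: "n \<ge> 1" and e: "is_projection star e" and c: "is_central e"
        and h: "r_ann (ideal_pow (rmul_set x) n) = r_ann (ideal_pow (rmul_set e) n)"
        using A by blast
      have ee: "e*e = e" "star e = e" using e unfolding is_projection_def by auto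
      have "r_ann (ideal_pow (rmul_set x) n) = rmul_set (u - e)"
        using h idem_pow[OF ee(1) n] ann_central[OF u c ee(1)] by simp
      moreover have "is_projection star (u - e)" unfolding is_projection_def
        using sminus su ee u by (simp add: left_diff_distrib right_diff_distrib)
      ultimately show "\<exists>n\<ge>1. \<exists>e. is_projection star e \<and> r_ann (ideal_pow (rmul_set x) n) = rmul_set e"
        using n by blast
    qed
  qed
qed

end
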